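(* Let $X$ and $Y$ be real Banach lattices (nonzero). The following are equivalent: (i) Every uniformly bounded subset $\mathscr{T}\subseteq\mathcal{L}(X,Y)$ is $\ell^2$-bounded. (ii) $X$ is $2$-concave and $Y$ is $2$-convex.
   Context: A family $\mathscr{T}\subseteq\mathcal{L}(X,Y)$ is uniformly bounded if $\sup_{T\in\mathscr{T}}\|T\|<\infty$. It is $\ell^2$-bounded if there is $C\ge0$ with $\|(\sum_{n=1}^N|T_nx_n|^2)^{1/2}\|\le C\|(\sum_{n=1}^N|x_n|^2)^{1/2}\|$ for all $N$, all $x_n\in X$ and all $T_n\in\mathscr{T}$ (square functions via Krivine's calculus). A Banach lattice $X$ is $2$-concave if there is $C_X$ with $(\sum_{n=1}^N\|x_n\|^2)^{1/2}\le C_X\|(\sum_{n=1}^N|x_n|^2)^{1/2}\|$ for all $N$ and $x_1,\dots,x_N\in X$; it is $2$-convex if $\|(\sum_{n=1}^N|x_n|^2)^{1/2}\|\le C_X(\sum_{n=1}^N\|x_n\|^2)^{1/2}$ for all such. *)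

theory Defs
  imports "HOL-Analysis.Analysis"
begin

text \<open>Real Banach lattices are modelled as types of sort
  {banach, ordered_real_vector, lattice} (a complete normed real vector space
  carrying a lattice order compatible with the vector operations, i.e. a Riesz
  space) satisfying the Banach lattice norm axiom below.\<close>

definition labs :: "'a::{ab_group_add, lattice} \<Rightarrow> 'a" where
  "labs x = sup x (- x)"

definition banach_lattice :: "'a::{banach, ordered_real_vector, lattice} itself \<Rightarrow> bool" where
  "banach_lattice _ \<longleftrightarrow> (\<forall>x y :: 'a. labs x \<le> labs y \<longrightarrow> norm x \<le> norm y)"

definition lub :: "'a::order set \<Rightarrow> 'a" where
  "lub S = (THE u. (\<forall>s\<in>S. s \<le> u) \<and> (\<forall>v. (\<forall>s\<in>S. s \<le> v) \<longrightarrow> u \<le> v))"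

text \<open>Square function (sum_{n<N} |x_n|^2)^(1/2), the Krivine calculus element,
  given by its standard description
  sup { sum_{n<N} a_n x_n : sum_{n<N} a_n^2 \<le> 1 }.\<close>
definition sqfun :: "nat \<Rightarrow> (nat \<Rightarrow> 'a::{banach, ordered_real_vector, lattice}) \<Rightarrow> 'a" where
  "sqfun N x = lub {(\<Sum>n<N. a n *\<^sub>R x n) | a. (\<Sum>n<N. (a n)\<^sup>2) \<le> 1}"

definition uniformly_bounded :: "('a::real_normed_vector \<Rightarrow>\<^sub>L 'b::real_normed_vector) set \<Rightarrow> bool" where
  "uniformly_bounded \<T> \<longleftrightarrow> (\<exists>M. \<forall>T\<in>\<T>. norm T \<le> M)"

definition l2_bounded ::
  "('a::{banach, ordered_real_vector, lattice} \<Rightarrow>\<^sub>L 'b::{banach, ordered_real_vector, lattice}) set \<Rightarrow> bool" where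
  "l2_bounded \<T> \<longleftrightarrow> (\<exists>C\<ge>0. \<forall>N (x :: nat \<Rightarrow> 'a) (T :: nat \<Rightarrow> ('a \<Rightarrow>\<^sub>L 'b)).
      (\<forall>n<N. T n \<in> \<T>) \<longrightarrow>
      norm (sqfun N (\<lambda>n. blinfun_apply (T n) (x n))) \<le> C * norm (sqfun N x))"

definition two_concave :: "'a::{banach, ordered_real_vector, lattice} itself \<Rightarrow> bool" where
  "two_concave _ \<longleftrightarrow> (\<exists>C. \<forall>N (x :: nat \<Rightarrow> 'a).
      sqrt (\<Sum>n<N. (norm (x n))\<^sup>2) \<le> C * norm (sqfun N x))"

definition two_convex :: "'a::{banach, ordered_real_vector, lattice} itself \<Rightarrow> bool" where
  "two_convex _ \<longleftrightarrow> (\<exists>C. \<forall>N (x :: nat \<Rightarrow> 'a).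
      norm (sqfun N x) \<le> C * sqrt (\<Sum>n<N. (norm (x n))\<^sup>2))"

end

theory Submission
  imports Defs
begin

definition okg :: "('a::real_normed_vector \<times> real) set \<Rightarrow> bool" where
"okg G \<longleftrightarrow> (0,0) \<in> G \<and> (\<forall>x a y b. (x,a)\<in>G \<longrightarrow> (y,b)\<in>G \<longrightarrow> (x+y,a+b)\<in>G)
   \<and> (\<forall>x a c. (x,a)\<in>G \<longrightarrow> (c *\<^sub>R x, c*a)\<in>G) \<and> (\<forall>x a. (x,a)\<in>G \<longrightarrow> a \<le> norm x)"

lemma okgD:
  assumes "okg G"
  shows okg_zero: "(0,0) \<in> G"
    and okg_add: "\<And>x a y b. (x,a)\<in>G \<Longrightarrow> (y,b)\<in>G \<Longrightarrow> (x+y,a+b)\<in>G"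
    and okg_scl: "\<And>x a c. (x,a)\<in>G \<Longrightarrow> (c *\<^sub>R x, c*a)\<in>G"
    and okg_dom: "\<And>x a. (x,a)\<in>G \<Longrightarrow> a \<le> norm x"
  using assms unfolding okg_def by blast+

lemma okg_fun:
  assumes "okg G" "(x,a)\<in>G" "(x,b)\<in>G" shows "a = b"
proof -
  have s: "\<And>x a y b. (x,a)\<in>G \<Longrightarrow> (y,b)\<in>G \<Longrightarrow> a - b \<le> norm (x - y)"
  proof -
    fix x a y b assume h: "(x,a)\<in>G" "(y,b)\<in>G"
    have "((-1) *\<^sub>R y, (-1)*b) \<in> G" using assms(1) h(2) unfolding okg_def by blast
    then have "(x + (-1) *\<^sub>R y, a + (-1)*b) \<in> G" using assms(1) h(1) unfolding okg_def by blast
    then have "a + (-1)*b \<le> norm (x + (-1) *\<^sub>R y)" using assms(1) unfolding okg_def by blast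
    then show "a - b \<le> norm (x - y)" by simp
  qed
  show ?thesis using s[OF assms(2,3)] s[OF assms(3,2)] by simp
qed

lemma okg_extend:
  assumes G: "okg G" and z: "z \<notin> fst ` G"
  shows "\<exists>G'. okg G' \<and> G \<subseteq> G' \<and> G' \<noteq> G"
proof -
  have add: "\<And>x a y b. (x,a)\<in>G \<Longrightarrow> (y,b)\<in>G \<Longrightarrow> (x+y,a+b)\<in>G"
   and scl: "\<And>x a c. (x,a)\<in>G \<Longrightarrow> (c *\<^sub>R x, c*a)\<in>G"
   and dom: "\<And>x a. (x,a)\<in>G \<Longrightarrow> a \<le> norm x"
   and zer: "(0,0) \<in> G" using G unfolding okg_def by blast+
  define S where "S = {a - norm (x - z) | x a. (x,a)\<in>G}"
  define c where "c = Sup S"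
  have key: "a + b \<le> norm (x - z) + norm (y + z)" if "(x,a)\<in>G" "(y,b)\<in>G" for x a y b
  proof -
    have "a + b \<le> norm (x + y)" using dom[OF add[OF that]] .
    also have "x + y = (x - z) + (y + z)" by simp
    also have "norm \<dots> \<le> norm (x - z) + norm (y + z)" by (rule norm_triangle_ineq)
    finally show ?thesis .
  qed
  have Sne: "S \<noteq> {}" using zer unfolding S_def by blast
  have Sbd: "\<And>s. s \<in> S \<Longrightarrow> s \<le> norm (y + z) - b" if "(y,b)\<in>G" for y b
    using key[OF _ that] unfolding S_def by fastforce
  have c_up: "a - norm (x - z) \<le> c" if "(x,a)\<in>G" for x a
    unfolding c_def
    apply (rule cSup_upper)
    using that apply (auto simp: S_def)[1]
    using Sbd[OF zer] by (auto simp: bdd_above_def)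
  have c_lo: "c \<le> norm (y + z) - b" if "(y,b)\<in>G" for y b
    unfolding c_def using Sne Sbd[OF that] by (rule cSup_least)
  define G' where "G' = {(x + t *\<^sub>R z, a + t * c) | x a t. (x,a)\<in>G}"
  have "okg G'"
    unfolding okg_def
  proof (intro conjI allI impI)
    show "(0,0) \<in> G'" unfolding G'_def using zer by force
  next
    fix x a y b assume "(x,a) \<in> G'" "(y,b) \<in> G'"
    then obtain x1 a1 t1 x2 a2 t2 where "(x1,a1)\<in>G" "(x2,a2)\<in>G"
      "x = x1 + t1 *\<^sub>R z" "a = a1 + t1 * c" "y = x2 + t2 *\<^sub>R z" "b = a2 + t2 * c"
      unfolding G'_def by blast
    then show "(x+y, a+b) \<in> G'" unfolding G'_def
      by (intro CollectI exI[of _ "x1+x2"] exI[of _ "a1+a2"] exI[of _ "t1+t2"])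
         (auto simp: add algebra_simps)
  next
    fix x a d assume "(x,a) \<in> G'"
    then obtain x1 a1 t1 where "(x1,a1)\<in>G"
      "x = x1 + t1 *\<^sub>R z" "a = a1 + t1 * c"
      unfolding G'_def by blast
    moreover have "(d *\<^sub>R x1 + (d*t1) *\<^sub>R z, d*a1 + (d*t1)*c) \<in> G'"
      unfolding G'_def using scl[OF \<open>(x1,a1)\<in>G\<close>, of d] by blast
    ultimately show "(d *\<^sub>R x, d*a) \<in> G'" by (simp add: algebra_simps)
  next
    fix x a assume "(x,a) \<in> G'"
    then obtain x1 a1 t where h: "(x1,a1)\<in>G"
      "x = x1 + t *\<^sub>R z" "a = a1 + t * c"
      unfolding G'_def by blast
    consider "t = 0" | "t > 0" | "t < 0" by linarith
    then show "a \<le> norm x"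
    proof cases
      case 1 then show ?thesis using h dom by simp
    next
      case 2
      have "c \<le> norm ((1/t) *\<^sub>R x1 + z) - (1/t)*a1" using c_lo[OF scl[OF h(1)]] .
      then have "t * c \<le> t * (norm ((1/t) *\<^sub>R x1 + z) - (1/t)*a1)"
        using 2 by (simp add: mult_left_mono)
      also have "\<dots> = t * norm ((1/t) *\<^sub>R x1 + z) - a1" using 2
        by (simp add: algebra_simps)
      also have "t * norm ((1/t) *\<^sub>R x1 + z) = norm (t *\<^sub>R ((1/t) *\<^sub>R x1 + z))"
        using 2 by simp
      also have "t *\<^sub>R ((1/t) *\<^sub>R x1 + z) = x1 + t *\<^sub>R z" using 2
        by (simp add: algebra_simps)
      finally show ?thesis using h by simp
    next
      case 3
      define s where "s = -t"
      have sp: "s > 0" using 3 s_def by simp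
      have "(1/s)*a1 - norm ((1/s) *\<^sub>R x1 - z) \<le> c" using c_up[OF scl[OF h(1)]] .
      then have "s * ((1/s)*a1 - norm ((1/s) *\<^sub>R x1 - z)) \<le> s * c"
        using sp by (simp add: mult_left_mono)
      moreover have "s * ((1/s)*a1 - norm ((1/s) *\<^sub>R x1 - z)) = a1 - s * norm ((1/s) *\<^sub>R x1 - z)"
        using sp by (simp add: algebra_simps)
      moreover have "s * norm ((1/s) *\<^sub>R x1 - z) = norm (s *\<^sub>R ((1/s) *\<^sub>R x1 - z))"
        using sp by simp
      moreover have "s *\<^sub>R ((1/s) *\<^sub>R x1 - z) = x1 + t *\<^sub>R z" using sp s_def
        by (simp add: algebra_simps)
      ultimately show ?thesis using h s_def by (simp add: algebra_simps)
    qed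
  qed
  moreover have "G \<subseteq> G'" unfolding G'_def by force
  moreover have "(z, c) \<in> G'" unfolding G'_def using zer
    by (intro CollectI exI[of _ 0] exI[of _ 0] exI[of _ 1]) simp
  then have "G' \<noteq> G" using z by force
  ultimately show ?thesis by blast
qed

lemma hahn_banach_norming:
  fixes x0 :: "'a::real_normed_vector"
  shows "\<exists>f::'a \<Rightarrow>\<^sub>L real. norm f \<le> 1 \<and> blinfun_apply f x0 = norm x0"
proof -
  define G0 where "G0 = {(t *\<^sub>R x0, t * norm x0) | t. True}"
  have ok0: "okg G0" unfolding okg_def G0_def
  proof (intro conjI allI impI)
    show "(0,0) \<in> {(t *\<^sub>R x0, t * norm x0) | t. True}" by (intro CollectI exI[of _ 0]) simp
  next
    fix x a y b assume "(x,a) \<in> {(t *\<^sub>R x0, t * norm x0) | t. True}" "(y,b) \<in> {(t *\<^sub>R x0, t * norm x0) | t. True}"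
    then obtain t s where "x = t *\<^sub>R x0" "a = t * norm x0" "y = s *\<^sub>R x0" "b = s * norm x0" by blast
    then show "(x+y,a+b) \<in> {(t *\<^sub>R x0, t * norm x0) | t. True}"
      by (intro CollectI exI[of _ "t+s"]) (simp add: algebra_simps)
  next
    fix x a c assume "(x,a) \<in> {(t *\<^sub>R x0, t * norm x0) | t. True}"
    then obtain t where "x = t *\<^sub>R x0" "a = t * norm x0" by blast
    then show "(c *\<^sub>R x, c*a) \<in> {(t *\<^sub>R x0, t * norm x0) | t. True}"
      by (intro CollectI exI[of _ "c*t"]) (simp add: algebra_simps)
  next
    fix x a assume "(x,a) \<in> {(t *\<^sub>R x0, t * norm x0) | t. True}"
    then obtain t where "x = t *\<^sub>R x0" "a = t * norm x0" by blast
    then show "a \<le> norm x" by (simp add: mult_right_mono)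
  qed
  define A where "A = {G. okg G \<and> G0 \<subseteq> G}"
  have "\<forall>C\<in>chains A. \<exists>U\<in>A. \<forall>X\<in>C. X \<subseteq> U"
  proof
    fix C assume C: "C \<in> chains A"
    show "\<exists>U\<in>A. \<forall>X\<in>C. X \<subseteq> U"
    proof (cases "C = {}")
      case True then show ?thesis using ok0 A_def by auto
    next
      case False
      have CA: "C \<subseteq> A" and ch: "\<And>X Y. X\<in>C \<Longrightarrow> Y\<in>C \<Longrightarrow> X \<subseteq> Y \<or> Y \<subseteq> X"
        using C unfolding chains_def chain_subset_def by auto
      have "okg (\<Union>C)" unfolding okg_def
      proof (intro conjI allI impI)
        obtain X where "X \<in> C" using False by blast
        then have "okg X" using CA A_def by blast
        then show "(0,0) \<in> \<Union>C" using okg_zero \<open>X \<in> C\<close> by blast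
      next
        fix x a y b assume "(x,a) \<in> \<Union>C" "(y,b) \<in> \<Union>C"
        then obtain X Y where XY: "X\<in>C" "Y\<in>C" "(x,a)\<in>X" "(y,b)\<in>Y" by blast
        from ch[OF XY(1,2)] show "(x+y,a+b) \<in> \<Union>C"
        proof
          assume "X \<subseteq> Y"
          moreover have "okg Y" using XY CA A_def by blast
          ultimately have "(x+y,a+b) \<in> Y" using okg_add XY by blast
          then show ?thesis using XY by blast
        next
          assume "Y \<subseteq> X"
          moreover have "okg X" using XY CA A_def by blast
          ultimately have "(x+y,a+b) \<in> X" using okg_add XY by blast
          then show ?thesis using XY by blast
        qed
      next
        fix x a c assume "(x,a) \<in> \<Union>C"
        then obtain X where "X \<in> C" "(x,a) \<in> X" by blast
        moreover then have "okg X" using CA A_def by blast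
        ultimately show "(c *\<^sub>R x, c*a) \<in> \<Union>C" using okg_scl by blast
      next
        fix x a assume "(x,a) \<in> \<Union>C"
        then obtain X where "X \<in> C" "(x,a) \<in> X" by blast
        moreover then have "okg X" using CA A_def by blast
        ultimately show "a \<le> norm x" using okg_dom by blast
      qed
      moreover have "G0 \<subseteq> \<Union>C" using False CA A_def by blast
      ultimately show ?thesis unfolding A_def by blast
    qed
  qed
  from Zorn_Lemma2[OF this] obtain M where MA: "M \<in> A" and Mmax: "\<And>X. X\<in>A \<Longrightarrow> M \<subseteq> X \<Longrightarrow> X = M"
    by blast
  have okM: "okg M" and G0M: "G0 \<subseteq> M" using MA A_def by auto
  have tot: "\<exists>a. (x,a) \<in> M" for x
  proof (rule ccontr)
    assume "\<not> (\<exists>a. (x,a) \<in> M)"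
    then have "x \<notin> fst ` M" by force
    from okg_extend[OF okM this] obtain G' where "okg G'" "M \<subseteq> G'" "G' \<noteq> M" by blast
    moreover have "G' \<in> A" using \<open>okg G'\<close> \<open>M \<subseteq> G'\<close> G0M A_def by blast
    ultimately show False using Mmax[of G'] by blast
  qed
  define g where "g x = (THE a. (x,a) \<in> M)" for x
  have gM: "(x, g x) \<in> M" for x
    unfolding g_def using tot[of x] okg_fun[OF okM] by (metis theI)
  have geq: "(x,a) \<in> M \<Longrightarrow> g x = a" for x a using okg_fun[OF okM gM] by blast
  have lin: "linear g"
  proof (rule linearI)
    fix x y show "g (x + y) = g x + g y"
      using okg_add[OF okM gM[of x] gM[of y]] geq by blast
  next
    fix c x show "g (c *\<^sub>R x) = c *\<^sub>R g x"
      using okg_scl[OF okM gM[of x], of c] geq by simp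
  qed
  have gb: "\<bar>g x\<bar> \<le> norm x" for x
  proof -
    have "g x \<le> norm x" using okg_dom[OF okM gM] by blast
    moreover have "g (-x) \<le> norm (-x)" using okg_dom[OF okM gM] by blast
    moreover have "g (-x) = - g x" using linear_neg[OF lin] by simp
    ultimately show ?thesis by simp
  qed
  have bl: "bounded_linear g"
  proof (rule bounded_linear_intro[where K=1])
    fix x y show "g (x + y) = g x + g y" using linear_add[OF lin] .
  next
    fix r x show "g (r *\<^sub>R x) = r *\<^sub>R g x" using linear_scale[OF lin] .
  next
    fix x show "norm (g x) \<le> norm x * 1" using gb[of x] by simp
  qed
  define f where "f = Blinfun g"
  have fa: "blinfun_apply f = g" unfolding f_def using bl by (simp add: bounded_linear_Blinfun_apply)
  have "norm f \<le> 1"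
    by (rule norm_blinfun_bound) (use gb fa in auto)
  moreover have "(x0, norm x0) \<in> M" using G0M unfolding G0_def
    by (rule subsetD) (intro CollectI exI[of _ 1], simp)
  then have "g x0 = norm x0" using geq by blast
  ultimately show ?thesis using fa by auto
qed

lemma lub_max:
  fixes A :: "'a::order set"
  assumes "m \<in> A" "\<And>s. s \<in> A \<Longrightarrow> s \<le> m"
  shows "lub A = m"
  unfolding lub_def
proof (rule the_equality)
  show "(\<forall>s\<in>A. s \<le> m) \<and> (\<forall>v. (\<forall>s\<in>A. s \<le> v) \<longrightarrow> m \<le> v)" using assms by blast
next
  fix u assume "(\<forall>s\<in>A. s \<le> u) \<and> (\<forall>v. (\<forall>s\<in>A. s \<le> v) \<longrightarrow> u \<le> v)"
  then show "u = m" using assms by (meson antisym)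
qed

lemma sqfun_scal:
  fixes u :: "'a::{banach, ordered_real_vector, lattice}"
  assumes u: "0 \<le> u"
  shows "sqfun N (\<lambda>n. c n *\<^sub>R u) = sqrt (\<Sum>n<N. (c n)\<^sup>2) *\<^sub>R u"
proof -
  define S where "S = sqrt (\<Sum>n<N. (c n)\<^sup>2)"
  have eq: "(\<Sum>n<N. a n *\<^sub>R (c n *\<^sub>R u)) = (\<Sum>n<N. a n * c n) *\<^sub>R u" for a
    by (simp add: scaleR_sum_left)
  show ?thesis unfolding sqfun_def S_def[symmetric]
  proof (rule lub_max)
    show "S *\<^sub>R u \<in> {\<Sum>n<N. a n *\<^sub>R (c n *\<^sub>R u) |a. (\<Sum>n<N. (a n)\<^sup>2) \<le> 1}"
    proof (cases "S = 0")
      case True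
      then show ?thesis by (intro CollectI exI[of _ "\<lambda>n. 0"]) simp
    next
      case False
      have "S \<ge> 0" unfolding S_def by (simp add: sum_nonneg)
      then have Spos: "S > 0" using False by linarith
      have SS: "S\<^sup>2 = (\<Sum>n<N. (c n)\<^sup>2)" unfolding S_def by (simp add: sum_nonneg)
      have "(\<Sum>n<N. (c n)\<^sup>2) > 0" using Spos by (simp add: SS[symmetric])
      have 1: "(\<Sum>n<N. (c n / S)\<^sup>2) = 1"
        using Spos SS \<open>(\<Sum>n<N. (c n)\<^sup>2) > 0\<close> by (simp add: power_divide sum_divide_distrib[symmetric])
      have "(\<Sum>n<N. c n / S * c n) = (\<Sum>n<N. (c n)\<^sup>2) / S"
        by (simp add: sum_divide_distrib power2_eq_square)
      also have "\<dots> = S\<^sup>2 / S" using SS by simp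
      also have "\<dots> = S" using Spos by (simp add: power2_eq_square)
      finally have 2: "(\<Sum>n<N. c n / S * c n) = S" .
      show ?thesis
        by (intro CollectI exI[of _ "\<lambda>n. c n / S"]) (simp only: eq 1 2, simp)
    qed
  next
    fix s assume "s \<in> {\<Sum>n<N. a n *\<^sub>R (c n *\<^sub>R u) |a. (\<Sum>n<N. (a n)\<^sup>2) \<le> 1}"
    then obtain a where a: "(\<Sum>n<N. (a n)\<^sup>2) \<le> 1" and s: "s = (\<Sum>n<N. a n * c n) *\<^sub>R u"
      using eq by blast
    have "(\<Sum>n<N. a n * c n)\<^sup>2 \<le> (\<Sum>n<N. (a n)\<^sup>2) * (\<Sum>n<N. (c n)\<^sup>2)"
      by (rule Cauchy_Schwarz_ineq_sum)
    also have "\<dots> \<le> 1 * (\<Sum>n<N. (c n)\<^sup>2)"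
      using a by (intro mult_right_mono) (auto simp: sum_nonneg)
    finally have "(\<Sum>n<N. a n * c n)\<^sup>2 \<le> (\<Sum>n<N. (c n)\<^sup>2)" by simp
    then have "(\<Sum>n<N. a n * c n) \<le> S" unfolding S_def by (simp add: real_le_rsqrt)
    then show "s \<le> S *\<^sub>R u" unfolding s using u by (rule scaleR_right_mono)
  qed
qed

lemma exists_pos_unit:
  assumes "\<exists>x::'a::{banach, ordered_real_vector, lattice}. x \<noteq> 0"
  shows "\<exists>u::'a. 0 \<le> u \<and> norm u = 1"
proof -
  obtain x :: 'a where x: "x \<noteq> 0" using assms by blast
  define w where "w = sup x (-x)"
  have "x \<le> w" "-x \<le> w" unfolding w_def by auto
  then have "x + -x \<le> w + w" by (rule add_mono)
  then have "0 \<le> w + w" by simp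
  then have "0 \<le> (1/2::real) *\<^sub>R (w + w)" by (intro scaleR_nonneg_nonneg) auto
  moreover have "(1/2::real) *\<^sub>R (w + w) = w"
  proof -
    have "w + w = (2::real) *\<^sub>R w" by (rule scaleR_2[symmetric])
    then show ?thesis by simp
  qed
  ultimately have w0: "0 \<le> w" by simp
  have "w \<noteq> 0"
  proof
    assume "w = 0"
    then have "x \<le> 0" "-x \<le> 0" using \<open>x \<le> w\<close> \<open>-x \<le> w\<close> by simp_all
    then show False using x by (metis antisym neg_le_0_iff_le)
  qed
  then have nw: "norm w > 0" by simp
  have "0 \<le> (1/norm w) *\<^sub>R w" using nw w0 by (intro scaleR_nonneg_nonneg) auto
  moreover have "norm ((1/norm w) *\<^sub>R w) = 1" using nw by simp
  ultimately show ?thesis by blast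
qed

definition rk :: "('a::real_normed_vector \<Rightarrow>\<^sub>L real) \<Rightarrow> 'b::real_normed_vector \<Rightarrow> ('a \<Rightarrow>\<^sub>L 'b)" where
  "rk f y = blinfun_scaleR_left y o\<^sub>L f"

lemma rk_apply: "blinfun_apply (rk f y) x = blinfun_apply f x *\<^sub>R y"
  unfolding rk_def by simp

lemma rk_norm:
  assumes "norm f \<le> 1" "norm y \<le> 1"
  shows "norm (rk f y) \<le> 1"
proof (rule norm_blinfun_bound)
  fix x
  have "norm (blinfun_apply (rk f y) x) = \<bar>blinfun_apply f x\<bar> * norm y" by (simp add: rk_apply)
  also have "\<dots> \<le> (norm f * norm x) * 1"
    using assms norm_blinfun[of f x] by (intro mult_mono) auto
  also have "\<dots> \<le> 1 * norm x" using mult_right_mono[OF assms(1) norm_ge_zero[of x]] by simp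
  finally show "norm (blinfun_apply (rk f y) x) \<le> 1 * norm x" .
qed simp

theorem mainTheorem10:
  assumes "banach_lattice TYPE('a::{banach, ordered_real_vector, lattice})"
    and "banach_lattice TYPE('b::{banach, ordered_real_vector, lattice})"
    and "\<exists>x::'a. x \<noteq> 0"
    and "\<exists>y::'b. y \<noteq> 0"
  shows "(\<forall>\<T> :: ('a \<Rightarrow>\<^sub>L 'b) set. uniformly_bounded \<T> \<longrightarrow> l2_bounded \<T>)
         \<longleftrightarrow> (two_concave TYPE('a) \<and> two_convex TYPE('b))"
proof
  assume H: "\<forall>\<T> :: ('a \<Rightarrow>\<^sub>L 'b) set. uniformly_bounded \<T> \<longrightarrow> l2_bounded \<T>"
  define F :: "('a \<Rightarrow>\<^sub>L 'b) set" where "F = {rk f y | f y. norm f \<le> 1 \<and> norm y \<le> 1}"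
  have "uniformly_bounded F" unfolding uniformly_bounded_def F_def
    using rk_norm by blast
  then have "l2_bounded F" using H by blast
  then obtain C where C0: "C \<ge> 0" and C: "\<And>N x T. (\<forall>n<N. T n \<in> F) \<Longrightarrow>
      norm (sqfun N (\<lambda>n. blinfun_apply (T n) (x n))) \<le> C * norm (sqfun N x)"
    unfolding l2_bounded_def by blast
  obtain u :: 'a where u0: "0 \<le> u" and u1: "norm u = 1" using exists_pos_unit[OF assms(3)] by blast
  obtain v :: 'b where v0: "0 \<le> v" and v1: "norm v = 1" using exists_pos_unit[OF assms(4)] by blast
  have "two_concave TYPE('a)" unfolding two_concave_def
  proof (intro exI allI)
    fix N and x :: "nat \<Rightarrow> 'a"
    have "\<forall>n. \<exists>f::'a \<Rightarrow>\<^sub>L real. norm f \<le> 1 \<and> blinfun_apply f (x n) = norm (x n)"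
      using hahn_banach_norming by blast
    then obtain fs where fs: "\<And>n. norm (fs n) \<le> 1" "\<And>n. blinfun_apply (fs n) (x n) = norm (x n)"
      by metis
    define T where "T n = rk (fs n) v" for n
    have TF: "\<forall>n<N. T n \<in> F" unfolding T_def F_def using fs(1) v1 by (metis (mono_tags, lifting) mem_Collect_eq order_refl)
    have Tx: "(\<lambda>n. blinfun_apply (T n) (x n)) = (\<lambda>n. norm (x n) *\<^sub>R v)"
      unfolding T_def by (simp add: rk_apply fs(2))
    have "norm (sqfun N (\<lambda>n. blinfun_apply (T n) (x n))) = sqrt (\<Sum>n<N. (norm (x n))\<^sup>2)"
      unfolding Tx sqfun_scal[OF v0] using v1 by (simp add: sum_nonneg)
    then show "sqrt (\<Sum>n<N. (norm (x n))\<^sup>2) \<le> C * norm (sqfun N x)"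
      using C[OF TF, of x] by simp
  qed
  moreover have "two_convex TYPE('b)" unfolding two_convex_def
  proof (intro exI allI)
    fix N and y :: "nat \<Rightarrow> 'b"
    obtain f0 :: "'a \<Rightarrow>\<^sub>L real" where f0: "norm f0 \<le> 1" "blinfun_apply f0 u = 1"
      using hahn_banach_norming[of u] u1 by auto
    define T where "T n = rk f0 ((1 / norm (y n)) *\<^sub>R y n)" for n
    define x where "x n = norm (y n) *\<^sub>R u" for n
    have nrm: "norm ((1 / norm (y n)) *\<^sub>R y n) \<le> 1" for n
      by (cases "y n = 0") auto
    have TF: "\<forall>n<N. T n \<in> F" unfolding T_def F_def using f0(1) nrm by blast
    have Tx: "(\<lambda>n. blinfun_apply (T n) (x n)) = y"
    proof
      fix n
      have "blinfun_apply (T n) (x n) = (norm (y n) * blinfun_apply f0 u) *\<^sub>R ((1 / norm (y n)) *\<^sub>R y n)"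
        unfolding T_def x_def rk_apply by (simp add: blinfun.scaleR_right)
      also have "\<dots> = y n" using f0(2) by (cases "y n = 0") auto
      finally show "blinfun_apply (T n) (x n) = y n" .
    qed
    have "norm (sqfun N x) = sqrt (\<Sum>n<N. (norm (y n))\<^sup>2)"
      unfolding x_def sqfun_scal[OF u0] using u1 by (simp add: sum_nonneg)
    then show "norm (sqfun N y) \<le> C * sqrt (\<Sum>n<N. (norm (y n))\<^sup>2)"
      using C[OF TF, of x] unfolding Tx by simp
  qed
  ultimately show "two_concave TYPE('a) \<and> two_convex TYPE('b)" by blast
next
  assume "two_concave TYPE('a) \<and> two_convex TYPE('b)"
  then obtain Cx Cy where
    Cx: "\<And>N (x :: nat \<Rightarrow> 'a). sqrt (\<Sum>n<N. (norm (x n))\<^sup>2) \<le> Cx * norm (sqfun N x)" and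
    Cy: "\<And>N (x :: nat \<Rightarrow> 'b). norm (sqfun N x) \<le> Cy * sqrt (\<Sum>n<N. (norm (x n))\<^sup>2)"
    unfolding two_concave_def two_convex_def by blast
  show "\<forall>\<T> :: ('a \<Rightarrow>\<^sub>L 'b) set. uniformly_bounded \<T> \<longrightarrow> l2_bounded \<T>"
  proof (intro allI impI)
    fix \<T> :: "('a \<Rightarrow>\<^sub>L 'b) set"
    assume "uniformly_bounded \<T>"
    then obtain M where M: "\<And>T. T \<in> \<T> \<Longrightarrow> norm T \<le> M" unfolding uniformly_bounded_def by blast
    show "l2_bounded \<T>" unfolding l2_bounded_def
    proof (intro exI[of _ "\<bar>Cy\<bar> * \<bar>M\<bar> * \<bar>Cx\<bar>"] conjI allI impI)
      show "0 \<le> \<bar>Cy\<bar> * \<bar>M\<bar> * \<bar>Cx\<bar>" by simp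
    next
      fix N and x :: "nat \<Rightarrow> 'a" and T :: "nat \<Rightarrow> ('a \<Rightarrow>\<^sub>L 'b)"
      assume TT: "\<forall>n<N. T n \<in> \<T>"
      define s where "s = sqrt (\<Sum>n<N. (norm (x n))\<^sup>2)"
      define t where "t = sqrt (\<Sum>n<N. (norm (blinfun_apply (T n) (x n)))\<^sup>2)"
      have s0: "s \<ge> 0" and t0: "t \<ge> 0" unfolding s_def t_def by (simp_all add: sum_nonneg)
      have "(\<Sum>n<N. (norm (blinfun_apply (T n) (x n)))\<^sup>2) \<le> (\<Sum>n<N. M\<^sup>2 * (norm (x n))\<^sup>2)"
      proof (rule sum_mono)
        fix n assume "n \<in> {..<N}"
        then have "norm (T n) \<le> M" using TT M by blast
        then have "norm (blinfun_apply (T n) (x n)) \<le> \<bar>M\<bar> * norm (x n)"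
          using norm_blinfun[of "T n" "x n"] by (meson abs_ge_self mult_right_mono norm_ge_zero order_trans)
        then have "(norm (blinfun_apply (T n) (x n)))\<^sup>2 \<le> (\<bar>M\<bar> * norm (x n))\<^sup>2"
          by (intro power_mono) auto
        then show "(norm (blinfun_apply (T n) (x n)))\<^sup>2 \<le> M\<^sup>2 * (norm (x n))\<^sup>2"
          by (simp add: power_mult_distrib)
      qed
      also have "\<dots> = M\<^sup>2 * (\<Sum>n<N. (norm (x n))\<^sup>2)" by (simp add: sum_distrib_left)
      finally have "t \<le> sqrt (M\<^sup>2 * (\<Sum>n<N. (norm (x n))\<^sup>2))" unfolding t_def
        by (rule real_sqrt_le_mono)
      also have "\<dots> = \<bar>M\<bar> * s" unfolding s_def by (simp add: real_sqrt_mult)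
      finally have ts: "t \<le> \<bar>M\<bar> * s" .
      have "norm (sqfun N (\<lambda>n. blinfun_apply (T n) (x n))) \<le> Cy * t" unfolding t_def by (rule Cy)
      also have "\<dots> \<le> \<bar>Cy\<bar> * t" using t0 by (simp add: mult_right_mono)
      also have "\<dots> \<le> \<bar>Cy\<bar> * (\<bar>M\<bar> * s)" using ts by (simp add: mult_left_mono)
      also have "\<dots> \<le> \<bar>Cy\<bar> * (\<bar>M\<bar> * (\<bar>Cx\<bar> * norm (sqfun N x)))"
      proof -
        have "s \<le> Cx * norm (sqfun N x)" unfolding s_def by (rule Cx)
        also have "\<dots> \<le> \<bar>Cx\<bar> * norm (sqfun N x)" by (simp add: mult_right_mono)
        finally show ?thesis by (simp add: mult_left_mono)
      qed
      finally show "norm (sqfun N (\<lambda>n. blinfun_apply (T n) (x n))) \<le> \<bar>Cy\<bar> * \<bar>M\<bar> * \<bar>Cx\<bar> * norm (sqfun N x)"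
        by (simp add: mult.assoc)
    qed
  qed
qed

end
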